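(* Let Assumptions 1 and 2 hold, let $\eta>0$, and define $\mathcal R:\Delta_N\to\mathbb{R}$ by $\mathcal R(x)=\sup_{\theta\in\mathbb{R}^N}\{\langle\theta,x\rangle-\varphi_\eta(\theta)\}$ (equivalently $\mathcal R=\eta\varphi_1^*$, where $\varphi_1^*$ is the convex conjugate of $\varphi_1$). Then: (i) $\mathcal R$ is $\frac{\eta}{L}$-strongly convex on $\Delta_N$ with respect to $\|\cdot\|_\infty$, i.e. $\mathcal R(\lambda x+(1-\lambda)y)\le\lambda\mathcal R(x)+(1-\lambda)\mathcal R(y)-\frac{\eta}{2L}\lambda(1-\lambda)\|x-y\|_\infty^2$ for all $x,y\in\Delta_N$, $\lambda\in[0,1]$; (ii) $\mathcal R$, viewed as a function on the affine hull $\{x:\sum_ix_i=1\}$, is differentiable at every point of the relative interior of $\Delta_N$; (iii) for every $\theta\in\mathbb{R}^N$, the problem $\max_{x\in\Delta_N}\{\langle\theta,x\rangle-\mathcal R(x)\}$ has a unique solution, and this solution is $\nabla\varphi_\eta(\theta)$.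
   Context: Let $N\ge 2$, $A=\{1,\dots,N\}$, and $\Delta_N=\{x\in\mathbb{R}^N: x_i\ge 0,\ \sum_i x_i=1\}$. Let $\epsilon=(\epsilon_1,\dots,\epsilon_N)$ be a random vector satisfying Assumption 1: each $\epsilon_i$ is integrable with $\mathbb{E}[\epsilon_i]=0$, and the law of $\epsilon$ is absolutely continuous with respect to Lebesgue measure on $\mathbb{R}^N$ with support all of $\mathbb{R}^N$. For $\eta>0$ the social surplus function is $\varphi_\eta(\theta)=\mathbb{E}[\max_{j\in A}(\theta_j+\eta\epsilon_j)]$, $\theta\in\mathbb{R}^N$; thus $\varphi_\eta(\theta)=\eta\varphi_1(\theta/\eta)$. $\varphi_\eta$ is convex and differentiable with $\nabla\varphi_\eta(\theta)\in\Delta_N$. Assumption 2: $\varphi_1$ is twice continuously differentiable and there is a constant $L>0$ with $2\,\mathrm{tr}(\nabla^2\varphi_1(\theta))\le L$ for all $\theta\in\mathbb{R}^N$. *)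

theory Defs
  imports "HOL-Probability.Probability"
begin

text \<open>Here the random vector epsilon is represented by its law P, a probability
measure on the Borel sets of real^'n; the index type 'n plays the role of A.\<close>

definition surplus :: "(real^'n::finite) measure \<Rightarrow> real \<Rightarrow> real^'n \<Rightarrow> real" where
  "surplus P \<eta> \<theta> = (\<integral>e. Max (range (\<lambda>j. \<theta>$j + \<eta> * e$j)) \<partial>P)"

definition prob_simplex :: "(real^'n::finite) set" where
  "prob_simplex = {x. (\<forall>i. 0 \<le> x$i) \<and> (\<Sum>i\<in>UNIV. x$i) = 1}"

definition regR :: "(real^'n::finite) measure \<Rightarrow> real \<Rightarrow> real^'n \<Rightarrow> real" where
  "regR P \<eta> x = (SUP \<theta>. \<theta> \<bullet> x - surplus P \<eta> \<theta>)"

end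

theory Submission
  imports Defs
begin


definition MM :: "real^'n::finite \<Rightarrow> real^'n \<Rightarrow> real" where
  "MM \<theta> e = Max (range (\<lambda>j. \<theta>$j + e$j))"

lemma MM_ge: "\<theta>$j + e$j \<le> MM \<theta> e"
  unfolding MM_def by (rule Max_ge) auto

lemma MM_le: "(\<And>j. \<theta>$j + e$j \<le> b) \<Longrightarrow> MM \<theta> e \<le> b"
  unfolding MM_def by (subst Max_le_iff) auto

lemma MM_in: obtains j where "MM \<theta> e = \<theta>$j + e$j"
proof -
  have "MM \<theta> e \<in> range (\<lambda>j. \<theta>$j + e$j)" unfolding MM_def by (rule Max_in) auto
  thus ?thesis using that by auto
qed

lemma MM_lip: "MM \<theta> e \<le> MM \<theta> e' + (\<Sum>j\<in>UNIV. \<bar>e$j - e'$j\<bar>)"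
proof -
  obtain j where j: "MM \<theta> e = \<theta>$j + e$j" by (rule MM_in)
  have "\<bar>e$j - e'$j\<bar> \<le> (\<Sum>j\<in>UNIV. \<bar>e$j - e'$j\<bar>)" by (rule member_le_sum) auto
  thus ?thesis using j MM_ge[of \<theta> j e'] by linarith
qed

lemma MM_cont: fixes \<theta> :: "real^'n::finite" shows "continuous_on UNIV (MM \<theta>)"
proof (rule lipschitz_on_continuous_on)
  show "lipschitz_on (real CARD('n)) UNIV (MM \<theta>)"
  proof (rule lipschitz_onI)
    fix e e' :: "real^'n"
    have b: "(\<Sum>j\<in>UNIV. \<bar>e$j - e'$j\<bar>) \<le> real CARD('n) * dist e e'"
    proof -
      have "(\<Sum>j\<in>UNIV. \<bar>e$j - e'$j\<bar>) \<le> (\<Sum>j\<in>(UNIV::'n set). dist e e')"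
        by (rule sum_mono) (metis component_le_norm_cart dist_norm vector_minus_component)
      thus ?thesis by simp
    qed
    have s: "(\<Sum>j\<in>UNIV. \<bar>e'$j - e$j\<bar>) = (\<Sum>j\<in>UNIV. \<bar>e$j - e'$j\<bar>)" by (simp add: abs_minus_commute)
    show "dist (MM \<theta> e) (MM \<theta> e') \<le> real CARD('n) * dist e e'"
      using MM_lip[of \<theta> e e'] MM_lip[of \<theta> e' e] b s by (simp add: dist_real_def abs_le_iff)
  qed simp
qed

lemma MM_shift: "MM (\<theta> + (\<chi> i. c)) e = MM \<theta> e + c"
proof (rule antisym)
  show "MM (\<theta> + (\<chi> i. c)) e \<le> MM \<theta> e + c" by (rule MM_le) (use MM_ge in simp)
  obtain j where "MM \<theta> e = \<theta>$j + e$j" by (rule MM_in)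
  thus "MM \<theta> e + c \<le> MM (\<theta> + (\<chi> i. c)) e" using MM_ge[of "\<theta> + (\<chi> i. c)" j e] by simp
qed

lemma MM_convex: "MM (t *\<^sub>R \<theta> + (1 - t) *\<^sub>R \<theta>') e \<le> t * MM \<theta> e + (1 - t) * MM \<theta>' e"
  if "0 \<le> t" "t \<le> 1"
proof (rule MM_le)
  fix j
  have "t * (\<theta>$j + e$j) \<le> t * MM \<theta> e" using MM_ge that by (intro mult_left_mono) auto
  moreover have "(1 - t) * (\<theta>'$j + e$j) \<le> (1 - t) * MM \<theta>' e" using MM_ge that by (intro mult_left_mono) auto
  ultimately show "(t *\<^sub>R \<theta> + (1 - t) *\<^sub>R \<theta>')$j + e$j \<le> t * MM \<theta> e + (1 - t) * MM \<theta>' e"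
    by (simp add: algebra_simps)
qed

lemma MM_scale: assumes "\<eta> > 0"
  shows "Max (range (\<lambda>j. \<theta>$j + \<eta> * e$j)) = \<eta> * MM ((1/\<eta>) *\<^sub>R \<theta>) e"
proof (rule antisym)
  show "Max (range (\<lambda>j. \<theta>$j + \<eta> * e$j)) \<le> \<eta> * MM ((1/\<eta>) *\<^sub>R \<theta>) e"
  proof (subst Max_le_iff, simp_all, intro allI)
    fix j
    have "\<theta>$j + \<eta> * e$j = \<eta> * (((1/\<eta>) *\<^sub>R \<theta>)$j + e$j)" using assms by (simp add: field_simps)
    also have "\<dots> \<le> \<eta> * MM ((1/\<eta>) *\<^sub>R \<theta>) e" using assms MM_ge[of "(1/\<eta>) *\<^sub>R \<theta>" j e] by (intro mult_left_mono) auto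
    finally show "\<theta>$j + \<eta> * e$j \<le> \<eta> * MM ((1/\<eta>) *\<^sub>R \<theta>) e" .
  qed
  obtain j where j: "MM ((1/\<eta>) *\<^sub>R \<theta>) e = ((1/\<eta>) *\<^sub>R \<theta>)$j + e$j" by (rule MM_in)
  have "\<eta> * MM ((1/\<eta>) *\<^sub>R \<theta>) e = \<theta>$j + \<eta> * e$j" using j assms by (simp add: field_simps)
  also have "\<dots> \<le> Max (range (\<lambda>j. \<theta>$j + \<eta> * e$j))" by (rule Max_ge) auto
  finally show "\<eta> * MM ((1/\<eta>) *\<^sub>R \<theta>) e \<le> Max (range (\<lambda>j. \<theta>$j + \<eta> * e$j))" .
qed

lemma surplus_1: "surplus P 1 \<theta> = (\<integral>e. MM \<theta> e \<partial>P)"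
  unfolding surplus_def MM_def by simp

lemma surplus_scale: assumes "\<eta> > 0" shows "surplus P \<eta> \<theta> = \<eta> * surplus P 1 ((1/\<eta>) *\<^sub>R \<theta>)"
proof -
  have "(\<lambda>e. Max (range (\<lambda>j. \<theta>$j + \<eta> * e$j))) = (\<lambda>e. \<eta> * MM ((1/\<eta>) *\<^sub>R \<theta>) e)"
    by (rule ext, rule MM_scale[OF assms])
  hence "surplus P \<eta> \<theta> = (\<integral>e. \<eta> * MM ((1/\<eta>) *\<^sub>R \<theta>) e \<partial>P)" unfolding surplus_def by simp
  thus ?thesis unfolding surplus_1 by simp
qed

lemma line_deriv:
  fixes f :: "real^'n::finite \<Rightarrow> real"
  assumes "(f has_derivative (\<lambda>h. a \<bullet> h)) (at (\<theta> + t *\<^sub>R w))"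
  shows "DERIV (\<lambda>s. f (\<theta> + s *\<^sub>R w)) t :> a \<bullet> w"
proof -
  have "((\<lambda>s. \<theta> + s *\<^sub>R w) has_derivative (\<lambda>h. h *\<^sub>R w)) (at t)"
    by (auto intro!: derivative_eq_intros)
  from has_derivative_compose[OF this assms]
  show ?thesis unfolding has_field_derivative_def
    by (rule has_derivative_eq_rhs) (auto simp: fun_eq_iff)
qed



locale absR =
  fixes F :: "real^'n::finite \<Rightarrow> real" and G :: "real^'n \<Rightarrow> real^'n" and C :: real
  assumes A1: "\<And>\<theta>. (F has_derivative (\<lambda>h. G \<theta> \<bullet> h)) (at \<theta>)"
  and A2: "\<And>\<theta> \<theta>'. F \<theta> + G \<theta> \<bullet> (\<theta>' - \<theta>) \<le> F \<theta>'"
  and A3: "\<And>\<theta> x. x \<in> prob_simplex \<Longrightarrow> \<theta> \<bullet> x \<le> F \<theta>"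
  and A4: "\<And>\<theta>. G \<theta> \<in> prob_simplex"
  and A5: "\<And>\<theta> c. F (\<theta> + (\<chi> i. c)) = F \<theta> + c"
  and A6: "\<And>\<theta> \<theta>' t. 0 \<le> t \<Longrightarrow> t \<le> 1 \<Longrightarrow> F (t *\<^sub>R \<theta> + (1-t) *\<^sub>R \<theta>') \<le> t * F \<theta> + (1-t) * F \<theta>'"
  and A7: "\<And>\<theta> d i k. d$i \<noteq> d$k \<Longrightarrow> F (\<theta> + (1/2) *\<^sub>R d) < (F \<theta> + F (\<theta> + d)) / 2"
  and A8: "\<And>\<theta> s k. F (\<theta> + s *\<^sub>R axis k 1) \<le> F \<theta> + s * G \<theta> $ k + C * s^2"
  and Cpos: "C > 0"
begin

definition R :: "real^'n \<Rightarrow> real" where "R x = (SUP \<theta>. \<theta> \<bullet> x - F \<theta>)"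

lemma R_ge: "x \<in> prob_simplex \<Longrightarrow> \<theta> \<bullet> x - F \<theta> \<le> R x"
  unfolding R_def
  by (rule cSUP_upper) (auto simp: bdd_above_def A3 intro!: exI[of _ 0])

lemma R_le: "(\<And>\<theta>. \<theta> \<bullet> x - F \<theta> \<le> b) \<Longrightarrow> R x \<le> b"
  unfolding R_def by (rule cSUP_least) auto

lemma R_G: "R (G \<theta>) = \<theta> \<bullet> G \<theta> - F \<theta>"
proof (rule antisym)
  show "R (G \<theta>) \<le> \<theta> \<bullet> G \<theta> - F \<theta>"
  proof (rule R_le)
    fix \<theta>' show "\<theta>' \<bullet> G \<theta> - F \<theta>' \<le> \<theta> \<bullet> G \<theta> - F \<theta>"
      using A2[of \<theta> \<theta>'] by (simp add: inner_diff_right inner_commute)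
  qed
  show "\<theta> \<bullet> G \<theta> - F \<theta> \<le> R (G \<theta>)" using R_ge A4 by blast
qed

lemma sub_unique:
  assumes sub: "\<And>\<theta>'. F \<theta> + x \<bullet> (\<theta>' - \<theta>) \<le> F \<theta>'"
  shows "x = G \<theta>"
proof -
  define w where "w = x - G \<theta>"
  define f where "f s = F (\<theta> + s *\<^sub>R w) - s * (x \<bullet> w)" for s :: real
  have d: "(f has_derivative (\<lambda>h. G \<theta> \<bullet> (h *\<^sub>R w) - h * (x \<bullet> w))) (at 0)"
  proof -
    have "((\<lambda>s. \<theta> + s *\<^sub>R w) has_derivative (\<lambda>h. h *\<^sub>R w)) (at 0)"
      by (auto intro!: derivative_eq_intros)
    from has_derivative_compose[OF this A1[of "\<theta> + 0 *\<^sub>R w"]]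
    have "((\<lambda>s. F (\<theta> + s *\<^sub>R w)) has_derivative (\<lambda>h. G \<theta> \<bullet> (h *\<^sub>R w))) (at 0)" by simp
    then show ?thesis unfolding f_def by (auto intro!: derivative_eq_intros)
  qed
  have "\<forall>y\<in>UNIV. f 0 \<le> f y"
  proof
    fix y :: real show "f 0 \<le> f y" using sub[of "\<theta> + y *\<^sub>R w"] by (simp add: f_def)
  qed
  from differential_zero_maxmin[OF _ _ d] this
  have "(\<lambda>h. G \<theta> \<bullet> (h *\<^sub>R w) - h * (x \<bullet> w)) = (\<lambda>h. 0)" by auto
  from fun_cong[OF this, of 1] have "(G \<theta> - x) \<bullet> w = 0" by (simp add: inner_diff_left)
  hence "w \<bullet> w = 0" unfolding w_def by (simp add: inner_diff_left inner_diff_right inner_commute)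
  thus ?thesis unfolding w_def by simp
qed

lemma part3:
  "(\<exists>!x. x \<in> prob_simplex \<and>
                 (\<forall>y\<in>prob_simplex. \<theta> \<bullet> y - R y \<le> \<theta> \<bullet> x - R x))
           \<and> (\<forall>x. x \<in> prob_simplex \<and>
                 (\<forall>y\<in>prob_simplex. \<theta> \<bullet> y - R y \<le> \<theta> \<bullet> x - R x)
                 \<longrightarrow> (F has_derivative (\<lambda>h. x \<bullet> h)) (at \<theta>))"
proof -
  have max: "\<forall>y\<in>prob_simplex. \<theta> \<bullet> y - R y \<le> \<theta> \<bullet> G \<theta> - R (G \<theta>)"
  proof
    fix y :: "real^'n" assume "y \<in> prob_simplex"
    from R_ge[OF this, of \<theta>] R_G[of \<theta>] show "\<theta> \<bullet> y - R y \<le> \<theta> \<bullet> G \<theta> - R (G \<theta>)" by linarith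
  qed
  have uniq: "x = G \<theta>" if "x \<in> prob_simplex" "\<forall>y\<in>prob_simplex. \<theta> \<bullet> y - R y \<le> \<theta> \<bullet> x - R x" for x
  proof (rule sub_unique)
    fix \<theta>'
    have "\<theta> \<bullet> G \<theta> - R (G \<theta>) \<le> \<theta> \<bullet> x - R x" using that A4 by blast
    hence "R x \<le> \<theta> \<bullet> x - F \<theta>" using R_G by simp
    moreover have "\<theta>' \<bullet> x - F \<theta>' \<le> R x" using R_ge that(1) by blast
    ultimately show "F \<theta> + x \<bullet> (\<theta>' - \<theta>) \<le> F \<theta>'" by (simp add: inner_diff_right inner_commute)
  qed
  show ?thesis
    using max uniq A4 A1 by (metis inner_commute)
qed

lemma infnorm_comp: fixes v :: "real^'n" obtains k where "infnorm v = \<bar>v$k\<bar>"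
proof -
  have "Max ((\<lambda>i. \<bar>v \<bullet> i\<bar>) ` Basis) \<in> (\<lambda>i. \<bar>v \<bullet> i\<bar>) ` Basis"
    by (rule Max_in) auto
  then obtain b where b0: "b \<in> Basis" "Max ((\<lambda>i. \<bar>v \<bullet> i\<bar>) ` Basis) = \<bar>v \<bullet> b\<bar>" by blast
  hence b: "b \<in> Basis" "infnorm v = \<bar>v \<bullet> b\<bar>" by (auto simp: infnorm_Max)
  then obtain k where "b = axis k 1" by (auto simp: Basis_vec_def)
  with b show ?thesis using that by (simp add: inner_axis)
qed

lemma part1:
  assumes x: "x \<in> prob_simplex" and y: "y \<in> prob_simplex" and t: "0 \<le> t" "t \<le> 1"
  shows "R (t *\<^sub>R x + (1 - t) *\<^sub>R y) \<le> t * R x + (1 - t) * R y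
             - t * (1 - t) / (4 * C) * (infnorm (x - y))\<^sup>2"
proof -
  define m where "m = infnorm (x - y)"
  obtain k where mk: "m = \<bar>(x - y)$k\<bar>" using infnorm_comp m_def by metis
  define u :: real where "u = (if (x - y)$k \<ge> 0 then 1 else -1)"
  have um: "u * (x$k - y$k) = m" and u2: "u * u = 1" using mk by (auto simp: u_def)
  define s where "s = m / (2 * C)"
  define a1 where "a1 = (1 - t) * s * u"
  define a2 where "a2 = - t * s * u"
  show ?thesis
  proof (rule R_le)
    fix \<theta>
    have I1: "\<theta> \<bullet> x + a1 * x$k - a1 * G \<theta> $ k - F \<theta> - C * a1^2 \<le> R x"
    proof -
      have "(\<theta> + a1 *\<^sub>R axis k 1) \<bullet> x - F (\<theta> + a1 *\<^sub>R axis k 1) \<le> R x" by (rule R_ge[OF x])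
      moreover have "(\<theta> + a1 *\<^sub>R axis k 1) \<bullet> x = \<theta> \<bullet> x + a1 * x$k"
        by (simp add: inner_add_left inner_axis')
      ultimately show ?thesis using A8[of \<theta> a1 k] by linarith
    qed
    have I2: "\<theta> \<bullet> y + a2 * y$k - a2 * G \<theta> $ k - F \<theta> - C * a2^2 \<le> R y"
    proof -
      have "(\<theta> + a2 *\<^sub>R axis k 1) \<bullet> y - F (\<theta> + a2 *\<^sub>R axis k 1) \<le> R y" by (rule R_ge[OF y])
      moreover have "(\<theta> + a2 *\<^sub>R axis k 1) \<bullet> y = \<theta> \<bullet> y + a2 * y$k"
        by (simp add: inner_add_left inner_axis')
      ultimately show ?thesis using A8[of \<theta> a2 k] by linarith
    qed
    have J: "t * (\<theta> \<bullet> x + a1 * x$k - a1 * G \<theta> $ k - F \<theta> - C * a1^2)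
           + (1 - t) * (\<theta> \<bullet> y + a2 * y$k - a2 * G \<theta> $ k - F \<theta> - C * a2^2) \<le> t * R x + (1 - t) * R y"
      using mult_left_mono[OF I1 t(1)] mult_left_mono[OF I2, of "1 - t"] t(2) by linarith
    have key: "t * (a1 * x$k - a1 * G \<theta> $ k - C * a1^2) + (1 - t) * (a2 * y$k - a2 * G \<theta> $ k - C * a2^2)
        = t * (1 - t) * (s * (u * (x$k - y$k)) - C * s^2 * (u * u))"
      unfolding a1_def a2_def by (simp add: algebra_simps power2_eq_square)
    have key2: "s * m - C * s^2 = m^2 / (4 * C)"
      using Cpos unfolding s_def by (simp add: field_simps power2_eq_square)
    have ip: "\<theta> \<bullet> (t *\<^sub>R x + (1 - t) *\<^sub>R y) = t * (\<theta> \<bullet> x) + (1 - t) * (\<theta> \<bullet> y)"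
      by (simp add: inner_add_right)
    have key3: "t * (a1 * x$k - a1 * G \<theta> $ k - C * a1^2) + (1 - t) * (a2 * y$k - a2 * G \<theta> $ k - C * a2^2)
        = t * (1 - t) * (s * m - C * s^2)" using key um u2 by simp
    also have "\<dots> = t * (1 - t) / (4 * C) * m^2" using key2 by simp
    finally have key4: "t * (a1 * x$k - a1 * G \<theta> $ k - C * a1^2) + (1 - t) * (a2 * y$k - a2 * G \<theta> $ k - C * a2^2)
        = t * (1 - t) / (4 * C) * m^2" .
    have ring: "t * (\<theta> \<bullet> x + a1 * x$k - a1 * G \<theta> $ k - F \<theta> - C * a1^2)
           + (1 - t) * (\<theta> \<bullet> y + a2 * y$k - a2 * G \<theta> $ k - F \<theta> - C * a2^2)
        = t * (\<theta> \<bullet> x) + (1 - t) * (\<theta> \<bullet> y) - F \<theta> + (t * (a1 * x$k - a1 * G \<theta> $ k - C * a1^2) + (1 - t) * (a2 * y$k - a2 * G \<theta> $ k - C * a2^2))"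
      by (simp add: algebra_simps)
    have "t * (\<theta> \<bullet> x + a1 * x$k - a1 * G \<theta> $ k - F \<theta> - C * a1^2)
           + (1 - t) * (\<theta> \<bullet> y + a2 * y$k - a2 * G \<theta> $ k - F \<theta> - C * a2^2)
        = \<theta> \<bullet> (t *\<^sub>R x + (1 - t) *\<^sub>R y) - F \<theta> + t * (1 - t) / (4 * C) * m^2"
      unfolding ring key4 ip by simp
    with J show "\<theta> \<bullet> (t *\<^sub>R x + (1 - t) *\<^sub>R y) - F \<theta>
        \<le> t * R x + (1 - t) * R y - t * (1 - t) / (4 * C) * (infnorm (x - y))\<^sup>2"
      unfolding m_def by linarith
  qed
qed

lemma F_cont: "continuous_on UNIV F"
  by (rule has_derivative_continuous_on[of _ F "\<lambda>\<theta> h. G \<theta> \<bullet> h"]) (use A1 has_derivative_at_withinI in blast)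

lemma sum_simplex: "x \<in> prob_simplex \<Longrightarrow> (\<Sum>i\<in>UNIV. x$i) = 1"
  by (simp add: prob_simplex_def)

lemma inner_const: "(\<chi> i. c) \<bullet> (x::real^'n) = c * (\<Sum>i\<in>UNIV. x$i)"
  by (simp add: inner_vec_def sum_distrib_left)

lemma axis_simplex: "axis j 1 \<in> (prob_simplex :: (real^'n) set)"
  by (auto simp: prob_simplex_def axis_def)

lemma surj:
  assumes x: "x \<in> prob_simplex" and pos: "\<And>i. 0 < x$i"
  shows "\<exists>\<theta>. G \<theta> = x"
proof -
  define K where "K \<theta> = F \<theta> - \<theta> \<bullet> x" for \<theta>
  define \<delta> where "\<delta> = Min (range (\<lambda>i. x$i))"
  have "\<delta> \<in> range (\<lambda>i. x$i)" unfolding \<delta>_def by (rule Min_in) auto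
  hence \<delta>pos: "\<delta> > 0" using pos by auto
  have \<delta>le: "\<delta> \<le> x$i" for i unfolding \<delta>_def by (rule Min_le) auto
  have F0: "0 \<le> F 0" using A3[OF x, of 0] by simp
  define Rr where "Rr = F 0 / \<delta> + 1"
  have Rrpos: "Rr > 0" unfolding Rr_def using F0 \<delta>pos by (simp add: field_simps)
  define B where "B = cbox (0::real^'n) (\<chi> i. Rr)"
  have contK: "continuous_on B K" unfolding K_def
    by (intro continuous_intros continuous_on_subset[OF F_cont]) auto
  have "0 \<in> B" unfolding B_def mem_box_cart using Rrpos by auto
  then obtain \<theta>s where \<theta>sB: "\<theta>s \<in> B" and \<theta>smin: "\<forall>y\<in>B. K \<theta>s \<le> K y"
    using continuous_attains_inf[OF _ _ contK] unfolding B_def by auto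
  have K0: "K \<theta>s \<le> K 0" using \<theta>smin \<open>0 \<in> B\<close> by blast
  have glob: "K \<theta>s \<le> K \<theta>" for \<theta>
  proof -
    define m where "m = Min (range (\<lambda>i. \<theta>$i))"
    have "m \<in> range (\<lambda>i. \<theta>$i)" unfolding m_def by (rule Min_in) auto
    then obtain k where k: "\<theta>$k = m" by auto
    have mle: "m \<le> \<theta>$i" for i unfolding m_def by (rule Min_le) auto
    define \<theta>' where "\<theta>' = \<theta> + (\<chi> i. - m)"
    have Keq: "K \<theta>' = K \<theta>"
      unfolding K_def \<theta>'_def A5 using sum_simplex[OF x] by (simp add: inner_add_left inner_const)
    have nn: "0 \<le> \<theta>'$i" for i using mle[of i] by (simp add: \<theta>'_def)
    have k0: "\<theta>'$k = 0" using k by (simp add: \<theta>'_def)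
    show ?thesis
    proof (cases "\<forall>i. \<theta>'$i \<le> Rr")
      case True
      hence "\<theta>' \<in> B" unfolding B_def mem_box_cart using nn by auto
      thus ?thesis using \<theta>smin Keq by auto
    next
      case False
      then obtain j where j: "\<theta>'$j > Rr" by (auto simp: not_le)
      define Mx where "Mx = Max (range (\<lambda>i. \<theta>'$i))"
      have "Mx \<in> range (\<lambda>i. \<theta>'$i)" unfolding Mx_def by (rule Max_in) auto
      then obtain j0 where j0: "\<theta>'$j0 = Mx" by auto
      have Mxge: "\<theta>'$i \<le> Mx" for i unfolding Mx_def by (rule Max_ge) auto
      have FMx: "Mx \<le> F \<theta>'" using A3[OF axis_simplex, of \<theta>' j0] j0 by (simp add: inner_axis)
      have "(\<Sum>i\<in>UNIV. x$i * (Mx - \<theta>'$i)) = Mx - \<theta>' \<bullet> x"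
        using sum_simplex[OF x]
        by (simp add: inner_vec_def right_diff_distrib sum_subtractf sum_distrib_left[symmetric] mult.commute)
      moreover have "x$k * (Mx - \<theta>'$k) \<le> (\<Sum>i\<in>UNIV. x$i * (Mx - \<theta>'$i))"
        by (rule member_le_sum) (use Mxge x in \<open>auto simp: prob_simplex_def\<close>)
      ultimately have "x$k * Mx \<le> Mx - \<theta>' \<bullet> x" using k0 by simp
      moreover have "\<delta> * Mx \<le> x$k * Mx" using \<delta>le[of k] Mxge[of j] j Rrpos by (intro mult_right_mono) auto
      moreover have "\<delta> * Rr < \<delta> * Mx" using Mxge[of j] j \<delta>pos by simp
      moreover have "\<delta> * Rr = F 0 + \<delta>" unfolding Rr_def using \<delta>pos by (simp add: field_simps)
      ultimately have "K 0 < K \<theta>'" unfolding K_def using FMx \<delta>pos by simp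
      thus ?thesis using K0 Keq by simp
    qed
  qed
  have dK: "(K has_derivative (\<lambda>h. G \<theta>s \<bullet> h - x \<bullet> h)) (at \<theta>s)"
    unfolding K_def using A1[of \<theta>s] by (auto intro!: derivative_eq_intros simp: inner_commute)
  from differential_zero_maxmin[OF _ _ dK] glob
  have "(\<lambda>h. G \<theta>s \<bullet> h - x \<bullet> h) = (\<lambda>h. 0)" by blast
  from fun_cong[OF this, of "G \<theta>s - x"] have "(G \<theta>s - x) \<bullet> (G \<theta>s - x) = 0"
    by (simp add: inner_diff_left)
  thus ?thesis by auto
qed

lemma aff_sum: "y \<in> affine hull (prob_simplex :: (real^'n) set) \<Longrightarrow> (\<Sum>i\<in>UNIV. y$i) = 1"
proof -
  have "affine {y :: real^'n. (\<Sum>i\<in>UNIV. y$i) = 1}"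
    unfolding affine_def by (auto simp: sum.distrib sum_distrib_left[symmetric])
  moreover have "prob_simplex \<subseteq> {y :: real^'n. (\<Sum>i\<in>UNIV. y$i) = 1}" by (auto simp: prob_simplex_def)
  ultimately have "affine hull (prob_simplex :: (real^'n) set) \<subseteq> {y. (\<Sum>i\<in>UNIV. y$i) = 1}"
    by (intro hull_minimal)
  thus "y \<in> affine hull prob_simplex \<Longrightarrow> (\<Sum>i\<in>UNIV. y$i) = 1" by auto
qed

lemma relint_pos:
  assumes x: "x \<in> rel_interior (prob_simplex :: (real^'n) set)" and N2: "CARD('n) \<ge> 2"
  shows "0 < x$i"
proof (rule ccontr)
  assume "\<not> 0 < x$i"
  obtain T where T: "open T" "x \<in> T" "x \<in> prob_simplex" "T \<inter> affine hull prob_simplex \<subseteq> prob_simplex"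
    using x unfolding mem_rel_interior by auto
  hence "0 \<le> x$i" by (simp add: prob_simplex_def)
  hence xi: "x$i = 0" using \<open>\<not> 0 < x$i\<close> by simp
  from T(1,2) obtain e where e: "e > 0" "ball x e \<subseteq> T" by (meson open_contains_ball)
  obtain j where j: "j \<noteq> i"
  proof -
    have "\<exists>j::'n. j \<noteq> i"
    proof (rule ccontr)
      assume "\<not> (\<exists>j::'n. j \<noteq> i)"
      hence "(UNIV :: 'n set) = {i}" by blast
      hence "CARD('n) = card {i}" by (rule arg_cong)
      thus False using N2 by simp
    qed
    thus ?thesis using that by blast
  qed
  define y where "y = 1 *\<^sub>R x + (e/4) *\<^sub>R axis j 1 + (- e/4) *\<^sub>R axis i 1"
  have "y \<in> affine hull prob_simplex"
    unfolding y_def by (rule mem_affine_3[OF affine_affine_hull hull_inc[OF T(3)] hull_inc[OF axis_simplex] hull_inc[OF axis_simplex]]) simp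
  moreover have "y \<in> ball x e"
  proof -
    have yx: "y - x = (e/4) *\<^sub>R (axis j 1 :: real^'n) + (- e/4) *\<^sub>R (axis i 1 :: real^'n)"
      unfolding y_def by simp
    have "norm (y - x) \<le> norm ((e/4) *\<^sub>R (axis j 1 :: real^'n)) + norm ((- e/4) *\<^sub>R (axis i 1 :: real^'n))"
      unfolding yx by (rule norm_triangle_ineq)
    also have "\<dots> = e / 2" using e by simp
    finally show ?thesis using e by (simp add: dist_norm norm_minus_commute)
  qed
  ultimately have "y \<in> T \<inter> affine hull prob_simplex" using e(2) by blast
  hence "y \<in> prob_simplex" using T(4) by blast
  moreover have "y$i < 0" unfolding y_def using xi j e by (simp add: axis_def)
  ultimately show False by (auto simp: prob_simplex_def not_less[symmetric])
qed

end


context absR begin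
lemma part2:
  assumes x: "x \<in> rel_interior (prob_simplex :: (real^'n) set)" and N2: "CARD('n) \<ge> 2"
  shows "R differentiable (at x within affine hull prob_simplex)"
proof -
  obtain T where T: "open T" "x \<in> T" "x \<in> prob_simplex" "T \<inter> affine hull prob_simplex \<subseteq> prob_simplex"
    using x unfolding mem_rel_interior by auto
  from T(1,2) obtain eT where eT: "eT > 0" "ball x eT \<subseteq> T" by (meson open_contains_ball)
  obtain \<theta> where G\<theta>: "G \<theta> = x" using surj[OF T(3) relint_pos[OF x N2]] by blast
  have Rx: "R x = \<theta> \<bullet> x - F \<theta>" by (metis R_G G\<theta>)
  have sx: "(\<Sum>i\<in>UNIV. x$i) = 1" using sum_simplex T(3) by blast
  define D where "D d = F (\<theta> + d) - F \<theta> - x \<bullet> d" for d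
  have Dnn: "0 \<le> D d" for d using A2[of \<theta> "\<theta> + d"] G\<theta> by (simp add: D_def)
  have Dscale: "D (t *\<^sub>R d) \<le> t * D d" if "0 \<le> t" "t \<le> 1" for t d
  proof -
    have "F (t *\<^sub>R (\<theta> + d) + (1 - t) *\<^sub>R \<theta>) \<le> t * F (\<theta> + d) + (1 - t) * F \<theta>" by (rule A6[OF that])
    moreover have "t *\<^sub>R (\<theta> + d) + (1 - t) *\<^sub>R \<theta> = \<theta> + t *\<^sub>R d" by (simp add: algebra_simps)
    ultimately show ?thesis by (simp add: D_def algebra_simps)
  qed
  have Dpos: "0 < D d" if "d$i \<noteq> d$k" for d i k
  proof (rule ccontr)
    assume "\<not> 0 < D d"
    hence D0: "D d = 0" using Dnn[of d] by simp
    have "D ((1/2) *\<^sub>R d) \<le> 0" using Dscale[of "1/2" d] D0 by simp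
    hence "D ((1/2) *\<^sub>R d) = 0" using Dnn by (meson antisym)
    with D0 have "F (\<theta> + (1/2) *\<^sub>R d) = (F \<theta> + F (\<theta> + d)) / 2" by (simp add: D_def)
    thus False using A7[OF that, of \<theta>] by simp
  qed
  have Dshift: "D (d + (\<chi> i. c)) = D d" for d c
    using A5[of "\<theta> + d" c] sx by (simp add: D_def add.assoc inner_add_right inner_commute[of x] inner_const)
  have Dcont: "continuous_on UNIV D" unfolding D_def
    by (intro continuous_intros continuous_on_compose2[OF F_cont]) auto
  have est: "\<exists>d>0. \<forall>y\<in>affine hull prob_simplex. norm (y - x) < d \<longrightarrow>
           norm (R y - R x - \<theta> \<bullet> (y - x)) \<le> \<epsilon> * norm (y - x)" if \<epsilon>: "\<epsilon> > 0" for \<epsilon>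
  proof -
    define S where "S = sphere 0 \<epsilon> \<inter> {d :: real^'n. (\<chi> i. 1) \<bullet> d = 0}"
    have cS: "compact S" unfolding S_def by (intro compact_Int_closed compact_sphere closed_hyperplane)
    have nonconst: "\<exists>i k. d$i \<noteq> d$k" if "d \<in> S" for d
    proof (rule ccontr)
      assume "\<not> (\<exists>i k. d$i \<noteq> d$k)"
      then obtain a where "\<forall>i. d$i = a" by blast
      hence "d = (\<chi> i. a)" by (simp add: vec_eq_iff)
      moreover have "(\<chi> i. 1) \<bullet> d = 0" using that by (simp add: S_def)
      ultimately have "a = 0" by (simp add: inner_const)
      hence "d = 0" using \<open>d = (\<chi> i. a)\<close> by (simp add: vec_eq_iff)
      thus False using that \<epsilon> by (simp add: S_def)
    qed
    obtain c where c: "c > 0" "\<forall>d\<in>S. c \<le> D d"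
    proof (cases "S = {}")
      case True thus ?thesis using that[of 1] by auto
    next
      case False
      from continuous_attains_inf[OF cS False continuous_on_subset[OF Dcont]]
      obtain d0 where "d0 \<in> S" "\<forall>d\<in>S. D d0 \<le> D d" by auto
      moreover have "D d0 > 0" using nonconst[OF \<open>d0 \<in> S\<close>] Dpos by blast
      ultimately show ?thesis using that by blast
    qed
    define \<delta> where "\<delta> = min (c / \<epsilon>) eT"
    have \<delta>pos: "\<delta> > 0" unfolding \<delta>_def using c \<epsilon> eT by simp
    show ?thesis
    proof (intro exI[of _ \<delta>] conjI \<delta>pos ballI impI)
      fix y assume yA: "y \<in> affine hull prob_simplex" and yd: "norm (y - x) < \<delta>"
      define v where "v = y - x"
      have "y \<in> ball x eT" using yd \<delta>_def by (simp add: dist_norm norm_minus_commute)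
      hence yS: "y \<in> prob_simplex" using eT T yA by blast
      have sv: "(\<Sum>i\<in>UNIV. v$i) = 0" using sum_simplex[OF yS] sx by (simp add: v_def sum_subtractf)
      have vsmall: "norm v * \<epsilon> < c" using yd \<epsilon> unfolding v_def \<delta>_def by (simp add: field_simps)
      have low: "\<theta> \<bullet> y - F \<theta> \<le> R y" by (rule R_ge[OF yS])
      have up: "R y \<le> \<theta> \<bullet> y - F \<theta> + \<epsilon> * norm v"
      proof (rule R_le)
        fix \<theta>'
        define d where "d = \<theta>' - \<theta>"
        define mu where "mu = (\<Sum>i\<in>UNIV. d$i) / real CARD('n)"
        define d0 where "d0 = d - (\<chi> i. mu)"
        have dd0: "d = d0 + (\<chi> i. mu)" unfolding d0_def by simp
        have sd0: "(\<chi> i. 1) \<bullet> d0 = 0"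
          unfolding d0_def mu_def by (simp add: inner_const inner_diff_right sum_subtractf)
        have DD: "D d = D d0" using Dshift dd0 by simp
        have dv: "d \<bullet> v = d0 \<bullet> v" unfolding dd0 using sv by (simp add: inner_add_left inner_const)
        have key: "d0 \<bullet> v \<le> D d0 + \<epsilon> * norm v"
        proof (cases "norm d0 \<le> \<epsilon>")
          case True
          have "d0 \<bullet> v \<le> norm d0 * norm v" by (rule norm_cauchy_schwarz)
          also have "\<dots> \<le> \<epsilon> * norm v" using True by (simp add: mult_right_mono)
          finally show ?thesis using Dnn[of d0] by linarith
        next
          case False
          define t where "t = \<epsilon> / norm d0"
          have nd0: "norm d0 > 0" using False \<epsilon> by linarith
          have t01: "0 \<le> t" "t \<le> 1" unfolding t_def using False \<epsilon> nd0 by (simp_all add: divide_le_eq_1)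
          have "t *\<^sub>R d0 \<in> S" unfolding S_def using sd0 nd0 \<epsilon>
            by (simp add: t_def inner_scaleR_right)
          hence "c \<le> D (t *\<^sub>R d0)" using c by blast
          also have "\<dots> \<le> t * D d0" by (rule Dscale[OF t01])
          finally have "c * norm d0 \<le> \<epsilon> * D d0" using nd0 by (simp add: t_def field_simps)
          hence "norm v * \<epsilon> * norm d0 \<le> \<epsilon> * D d0"
            using vsmall nd0 by (smt (verit) mult_right_mono)
          hence "\<epsilon> * (norm d0 * norm v) \<le> \<epsilon> * D d0" by (simp add: ac_simps)
          hence "norm d0 * norm v \<le> D d0" using \<epsilon> by simp
          moreover have "d0 \<bullet> v \<le> norm d0 * norm v" by (rule norm_cauchy_schwarz)
          moreover have "0 \<le> \<epsilon> * norm v" using \<epsilon> by simp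
          ultimately show ?thesis by linarith
        qed
        have "\<theta>' \<bullet> y - F \<theta>' = \<theta> \<bullet> y + d \<bullet> v + d \<bullet> x - F (\<theta> + d)"
          unfolding d_def v_def by (simp add: inner_diff_left inner_diff_right)
        also have "\<dots> = \<theta> \<bullet> y - F \<theta> + (d0 \<bullet> v - D d0)"
          using dv DD by (simp add: D_def inner_commute)
        finally show "\<theta>' \<bullet> y - F \<theta>' \<le> \<theta> \<bullet> y - F \<theta> + \<epsilon> * norm v" using key by simp
      qed
      have "R y - R x - \<theta> \<bullet> (y - x) = R y - (\<theta> \<bullet> y - F \<theta>)"
        using Rx by (simp add: inner_diff_right)
      thus "norm (R y - R x - \<theta> \<bullet> (y - x)) \<le> \<epsilon> * norm (y - x)"
        using low up unfolding v_def by simp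
    qed
  qed
  have "(R has_derivative (\<lambda>h. \<theta> \<bullet> h)) (at x within affine hull prob_simplex)"
    unfolding has_derivative_within_alt using est by (simp add: bounded_linear_inner_right)
  thus ?thesis unfolding differentiable_def by blast
qed

end



locale sur = prob_space P for P :: "(real^'n::finite) measure" +
  fixes g :: "real^'n \<Rightarrow> real^'n"
  assumes sets_P: "sets P = sets borel"
    and integ: "\<And>i. integrable P (\<lambda>e. e$i)"
    and mean0: "\<And>i. (\<integral>e. e$i \<partial>P) = 0"
    and full_supp: "\<And>U. open U \<Longrightarrow> U \<noteq> {} \<Longrightarrow> emeasure P U > 0"
    and grad: "\<And>\<theta>. (surplus P 1 has_derivative (\<lambda>h. g \<theta> \<bullet> h)) (at \<theta>)"
begin

abbreviation "phi \<equiv> surplus P 1"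

lemma meas_cong: "f \<in> borel_measurable borel \<Longrightarrow> f \<in> borel_measurable P"
  using measurable_cong_sets[OF sets_P refl] by blast

lemma space_P: "space P = UNIV"
  using sets_eq_imp_space_eq[OF sets_P] by simp

lemma MM_meas: "MM \<theta> \<in> borel_measurable P"
  by (rule meas_cong, rule borel_measurable_continuous_onI, rule MM_cont)

lemma MM_int: "integrable P (MM \<theta>)"
proof (rule Bochner_Integration.integrable_bound[OF _ MM_meas])
  show "integrable P (\<lambda>e. (\<Sum>j\<in>UNIV. \<bar>\<theta>$j\<bar>) + (\<Sum>j\<in>UNIV. \<bar>e$j\<bar>))"
    using integ by (intro Bochner_Integration.integrable_add integrable_sum integrable_abs) auto
  show "AE e in P. norm (MM \<theta> e) \<le> norm ((\<Sum>j\<in>UNIV. \<bar>\<theta>$j\<bar>) + (\<Sum>j\<in>UNIV. \<bar>e$j\<bar>))"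
  proof (rule AE_I2)
    fix e
    obtain j where j: "MM \<theta> e = \<theta>$j + e$j" by (rule MM_in)
    have "\<bar>\<theta>$j\<bar> \<le> (\<Sum>j\<in>UNIV. \<bar>\<theta>$j\<bar>)" "\<bar>e$j\<bar> \<le> (\<Sum>j\<in>UNIV. \<bar>e$j\<bar>)"
      by (rule member_le_sum; auto)+
    moreover have "0 \<le> (\<Sum>j\<in>UNIV. \<bar>\<theta>$j\<bar>)" "0 \<le> (\<Sum>j\<in>UNIV. \<bar>e$j\<bar>)" by (auto intro: sum_nonneg)
    ultimately show "norm (MM \<theta> e) \<le> norm ((\<Sum>j\<in>UNIV. \<bar>\<theta>$j\<bar>) + (\<Sum>j\<in>UNIV. \<bar>e$j\<bar>))"
      using j by (simp add: abs_le_iff)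
  qed
qed

lemma phi_def': "phi \<theta> = (\<integral>e. MM \<theta> e \<partial>P)" by (rule surplus_1)

lemma phi_convex: "0 \<le> t \<Longrightarrow> t \<le> 1 \<Longrightarrow> phi (t *\<^sub>R \<theta> + (1 - t) *\<^sub>R \<theta>') \<le> t * phi \<theta> + (1 - t) * phi \<theta>'"
proof -
  assume t: "0 \<le> t" "t \<le> 1"
  have "phi (t *\<^sub>R \<theta> + (1 - t) *\<^sub>R \<theta>') \<le> (\<integral>e. t * MM \<theta> e + (1 - t) * MM \<theta>' e \<partial>P)"
    unfolding phi_def' using MM_convex[OF t] by (intro Bochner_Integration.integral_mono MM_int Bochner_Integration.integrable_add integrable_mult_right) auto
  also have "\<dots> = t * phi \<theta> + (1 - t) * phi \<theta>'"
    unfolding phi_def' by (subst Bochner_Integration.integral_add) (auto intro!: integrable_mult_right MM_int)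
  finally show ?thesis .
qed

lemma phi_shift: "phi (\<theta> + (\<chi> i. c)) = phi \<theta> + c"
  unfolding phi_def' MM_shift by (subst Bochner_Integration.integral_add) (auto intro!: MM_int simp: prob_space)

lemma phi_ge_comp: "\<theta>$j \<le> phi \<theta>"
proof -
  have "(\<integral>e. \<theta>$j + e$j \<partial>P) \<le> phi \<theta>"
    unfolding phi_def' using MM_ge integ by (intro Bochner_Integration.integral_mono MM_int Bochner_Integration.integrable_add) auto
  moreover have "(\<integral>e. \<theta>$j + e$j \<partial>P) = \<theta>$j"
    using integ mean0 by (subst Bochner_Integration.integral_add) (auto simp: prob_space)
  ultimately show ?thesis by simp
qed

lemma phi_ge_inner: assumes x: "x \<in> prob_simplex" shows "\<theta> \<bullet> x \<le> phi \<theta>"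
proof -
  have "\<theta> \<bullet> x = (\<Sum>j\<in>UNIV. x$j * \<theta>$j)" by (simp add: inner_vec_def mult.commute)
  also have "\<dots> \<le> (\<Sum>j\<in>UNIV. x$j * phi \<theta>)"
    using x phi_ge_comp by (intro sum_mono mult_left_mono) (auto simp: prob_simplex_def)
  also have "\<dots> = phi \<theta>" using x by (simp add: prob_simplex_def sum_distrib_right[symmetric])
  finally show ?thesis .
qed

lemma phi_mono_dir: "phi (\<theta> - axis i 1) \<le> phi \<theta>"
proof -
  have "MM (\<theta> - axis i 1) e \<le> MM \<theta> e" for e
  proof (rule MM_le)
    fix j show "(\<theta> - axis i 1)$j + e$j \<le> MM \<theta> e"
      using MM_ge[of \<theta> j e] by (cases "j = i") (auto simp: axis_def)
  qed
  thus ?thesis unfolding phi_def' by (intro Bochner_Integration.integral_mono MM_int) auto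
qed

lemma phi_sub: "phi \<theta> + g \<theta> \<bullet> (\<theta>' - \<theta>) \<le> phi \<theta>'"
proof (rule ccontr)
  define w where "w = \<theta>' - \<theta>"
  define c0 where "c0 = phi \<theta>' - phi \<theta>"
  assume "\<not> phi \<theta> + g \<theta> \<bullet> (\<theta>' - \<theta>) \<le> phi \<theta>'"
  hence pos: "0 < g \<theta> \<bullet> w - c0" unfolding w_def c0_def by simp
  define k where "k s = phi (\<theta> + s *\<^sub>R w) - s * c0" for s
  have "DERIV (\<lambda>s. phi (\<theta> + s *\<^sub>R w)) 0 :> g \<theta> \<bullet> w"
    by (rule line_deriv) (use grad[of \<theta>] in simp)
  hence "DERIV k 0 :> g \<theta> \<bullet> w - c0" unfolding k_def
    by (auto intro!: derivative_eq_intros)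
  from DERIV_pos_inc_right[OF this pos] obtain d where d: "d > 0" "\<forall>h>0. h < d \<longrightarrow> k 0 < k (0 + h)" by blast
  define h where "h = min (d/2) 1"
  have h: "0 < h" "h < d" "h \<le> 1" using d by (auto simp: h_def)
  have "\<theta> + h *\<^sub>R w = h *\<^sub>R \<theta>' + (1 - h) *\<^sub>R \<theta>" by (simp add: w_def algebra_simps)
  hence "k h \<le> h * phi \<theta>' + (1 - h) * phi \<theta> - h * c0"
    using phi_convex[of h \<theta>' \<theta>] h by (simp add: k_def)
  also have "\<dots> = k 0" by (simp add: k_def c0_def algebra_simps)
  finally show False using d(2) h by force
qed

lemma g_simplex: "g \<theta> \<in> prob_simplex"
proof -
  have nn: "0 \<le> g \<theta> $ i" for i
  proof -
    have "phi \<theta> + g \<theta> \<bullet> ((\<theta> - axis i 1) - \<theta>) \<le> phi (\<theta> - axis i 1)" by (rule phi_sub)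
    hence "phi \<theta> - g \<theta> $ i \<le> phi \<theta>" using phi_mono_dir[of \<theta> i] by (simp add: inner_axis)
    thus ?thesis by simp
  qed
  have ic: "g \<theta> \<bullet> (\<chi> i. c) = c * (\<Sum>i\<in>UNIV. g \<theta> $ i)" for c
    by (simp add: inner_vec_def sum_distrib_left mult.commute)
  have "phi \<theta> + g \<theta> \<bullet> ((\<theta> + (\<chi> i. 1)) - \<theta>) \<le> phi (\<theta> + (\<chi> i. 1))" by (rule phi_sub)
  hence a: "(\<Sum>i\<in>UNIV. g \<theta> $ i) \<le> 1" using ic[of 1] phi_shift[of \<theta> 1] by simp
  have "phi \<theta> + g \<theta> \<bullet> ((\<theta> + (\<chi> i. -1)) - \<theta>) \<le> phi (\<theta> + (\<chi> i. -1))" by (rule phi_sub)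
  hence b: "1 \<le> (\<Sum>i\<in>UNIV. g \<theta> $ i)" using ic[of "-1"] phi_shift[of \<theta> "-1"] by simp
  show ?thesis using nn a b by (auto simp: prob_simplex_def)
qed

lemma phi_strict_aux:
  assumes ab: "d$b < d$a"
  shows "phi (\<theta> + (1/2) *\<^sub>R d) < (phi \<theta> + phi (\<theta> + d)) / 2"
proof (rule ccontr)
  assume contra: "\<not> phi (\<theta> + (1/2) *\<^sub>R d) < (phi \<theta> + phi (\<theta> + d)) / 2"
  define Fd where "Fd e = (MM \<theta> e + MM (\<theta> + d) e) / 2 - MM (\<theta> + (1/2) *\<^sub>R d) e" for e
  have Fnn: "0 \<le> Fd e" for e
  proof -
    have "\<theta> + (1/2) *\<^sub>R d = (1/2) *\<^sub>R \<theta> + (1 - 1/2) *\<^sub>R (\<theta> + d)" by (simp add: vec_eq_iff field_simps)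
    hence "MM (\<theta> + (1/2) *\<^sub>R d) e \<le> (1/2) * MM \<theta> e + (1 - 1/2) * MM (\<theta> + d) e"
      using MM_convex[of "1/2" \<theta> "\<theta> + d" e] by simp
    thus ?thesis by (simp add: Fd_def)
  qed
  have cont: "continuous_on UNIV Fd" unfolding Fd_def
    by (intro continuous_intros continuous_on_add continuous_on_diff continuous_on_divide MM_cont) auto
  define U where "U = {e. (\<lambda>e. 0) e < Fd e}"
  have oU: "open U" unfolding U_def by (rule open_Collect_less[OF continuous_on_const cont])
  define B where "B = (\<Sum>j\<in>UNIV. \<bar>d$j\<bar>)"
  define aa where "aa j = (if j = b then 0 else if j = a then - (d$a - d$b) / 2 else - B)" for j
  define e0 :: "real^'n" where "e0 = (\<chi> j. aa j - \<theta>$j)"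
  have ba: "b \<noteq> a" using ab by auto
  have m1: "0 \<le> MM \<theta> e0" using MM_ge[of \<theta> b e0] by (simp add: e0_def aa_def)
  have m2: "(d$a + d$b) / 2 \<le> MM (\<theta> + d) e0" using MM_ge[of "\<theta> + d" a e0] ba
    by (simp add: e0_def aa_def field_simps)
  have m3: "MM (\<theta> + (1/2) *\<^sub>R d) e0 \<le> d$b / 2"
  proof (rule MM_le)
    fix j
    show "(\<theta> + (1/2) *\<^sub>R d)$j + e0$j \<le> d$b / 2"
    proof (cases "j = b \<or> j = a")
      case True thus ?thesis using ba by (auto simp: e0_def aa_def field_simps)
    next
      case False
      have "(\<Sum>i\<in>{j, b}. \<bar>d$i\<bar>) \<le> B" unfolding B_def by (rule sum_mono2) auto
      hence "\<bar>d$j\<bar> + \<bar>d$b\<bar> \<le> B" using False by simp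
      moreover have "(\<theta> + (1/2) *\<^sub>R d)$j + e0$j = d$j / 2 - B" using False by (simp add: e0_def aa_def)
      moreover have "d$j \<le> \<bar>d$j\<bar>" "- \<bar>d$b\<bar> \<le> d$b" by auto
      ultimately show ?thesis by linarith
    qed
  qed
  have aux: "0 < (A + Bm)/2 - Cc" if "0 \<le> A" "(da+db)/2 \<le> Bm" "Cc \<le> db/2" "db < da"
    for A Bm Cc da db :: real using that by (simp add: field_simps)
  have "0 < Fd e0" unfolding Fd_def by (rule aux[OF m1 m2 m3 ab])
  hence "U \<noteq> {}" unfolding U_def by auto
  hence pos: "emeasure P U > 0" using full_supp oU by blast
  have iFd: "integrable P Fd" unfolding Fd_def
    by (intro Bochner_Integration.integrable_diff integrable_divide Bochner_Integration.integrable_add MM_int)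
  have "(\<integral>e. Fd e \<partial>P) = (phi \<theta> + phi (\<theta> + d)) / 2 - phi (\<theta> + (1/2) *\<^sub>R d)"
    unfolding Fd_def phi_def'
    by (simp add: Bochner_Integration.integral_diff Bochner_Integration.integral_add MM_int integrable_divide Bochner_Integration.integrable_add)
  hence "(\<integral>e. Fd e \<partial>P) \<le> 0" using contra by simp
  moreover have "0 \<le> (\<integral>e. Fd e \<partial>P)" using Fnn by (simp add: Bochner_Integration.integral_nonneg)
  ultimately have i0: "(\<integral>e. Fd e \<partial>P) = 0" by linarith
  have ae0: "AE e in P. 0 \<le> Fd e" by (rule AE_I2) (rule Fnn)
  have ae: "AE e in P. Fd e = 0" using integral_nonneg_eq_0_iff_AE[OF iFd ae0] i0 by blast
  have UP: "U \<in> sets P" using oU sets_P by simp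
  have seteq: "{e \<in> space P. \<not> Fd e = 0} = U"
  proof (rule set_eqI)
    fix e show "e \<in> {e \<in> space P. \<not> Fd e = 0} \<longleftrightarrow> e \<in> U"
      using Fnn[of e] unfolding U_def space_P by auto
  qed
  have "emeasure P U = 0" using AE_iff_measurable[OF UP seteq] ae by blast
  thus False using pos by simp
qed

lemma phi_strict:
  assumes "d$i \<noteq> d$k"
  shows "phi (\<theta> + (1/2) *\<^sub>R d) < (phi \<theta> + phi (\<theta> + d)) / 2"
proof (cases "d$k < d$i")
  case True thus ?thesis by (rule phi_strict_aux)
next
  case False
  hence "d$i < d$k" using assms by simp
  thus ?thesis by (rule phi_strict_aux)
qed

end



locale sur2 = sur P g for P :: "(real^'n::finite) measure" and g +
  fixes H :: "real^'n \<Rightarrow> real^'n^'n" and L :: real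
  assumes hess: "\<And>\<theta>. (g has_derivative (\<lambda>h. H \<theta> *v h)) (at \<theta>)"
    and trace_bd: "\<And>\<theta>. 2 * trace (H \<theta>) \<le> L"
begin

lemma D2: "DERIV (\<lambda>s. g (\<theta> + s *\<^sub>R axis j 1) $ j) t :> H (\<theta> + t *\<^sub>R axis j 1) $ j $ j"
proof -
  have "((\<lambda>s. \<theta> + s *\<^sub>R axis j 1) has_derivative (\<lambda>h. h *\<^sub>R axis j 1)) (at t)"
    by (auto intro!: derivative_eq_intros)
  from has_derivative_compose[OF this hess[of "\<theta> + t *\<^sub>R axis j 1"]]
  have "((\<lambda>s. g (\<theta> + s *\<^sub>R axis j 1)) has_derivative (\<lambda>h. H (\<theta> + t *\<^sub>R axis j 1) *v (h *\<^sub>R axis j 1))) (at t)" .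
  from bounded_linear.has_derivative[OF bounded_linear_vec_nth[of j] this]
  show ?thesis unfolding has_field_derivative_def
    by (rule has_derivative_eq_rhs) (auto simp: fun_eq_iff matrix_vector_mult_scaleR matrix_vector_mult_basis column_def)
qed

lemma Hdiag_nn: "0 \<le> H \<theta> $ j $ j"
proof (rule ccontr)
  assume "\<not> 0 \<le> H \<theta> $ j $ j"
  hence neg: "H \<theta> $ j $ j < 0" by simp
  define q where "q = (\<lambda>s. g (\<theta> + s *\<^sub>R axis j 1) $ j)"
  have "DERIV q 0 :> H \<theta> $ j $ j" using D2[of \<theta> j 0] by (simp add: q_def)
  from DERIV_neg_dec_right[OF this neg] obtain d where d: "d > 0" "\<forall>h>0. h < d \<longrightarrow> q 0 > q (0 + h)" by blast
  have mono: "q 0 \<le> q s" if "s > 0" for s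
  proof -
    define \<theta>' where "\<theta>' = \<theta> + s *\<^sub>R axis j 1"
    have "phi \<theta> + g \<theta> \<bullet> (\<theta>' - \<theta>) \<le> phi \<theta>'" by (rule phi_sub)
    moreover have "phi \<theta>' + g \<theta>' \<bullet> (\<theta> - \<theta>') \<le> phi \<theta>" by (rule phi_sub)
    ultimately have "s * (g \<theta> $ j) \<le> s * (g \<theta>' $ j)"
      unfolding \<theta>'_def by (simp add: inner_axis)
    thus ?thesis using that by (simp add: q_def \<theta>'_def)
  qed
  have "q (0 + d/2) < q 0" using d by simp
  moreover have "q 0 \<le> q (d/2)" using mono[of "d/2"] d by simp
  ultimately show False by simp
qed

lemma Hkk_le: "H \<theta> $ k $ k \<le> L / 2"
proof -
  have "H \<theta> $ k $ k \<le> (\<Sum>j\<in>UNIV. H \<theta> $ j $ j)" by (rule member_le_sum) (auto intro: Hdiag_nn)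
  thus ?thesis using trace_bd[of \<theta>] by (simp add: trace_def)
qed

lemma phi_smooth: "phi (\<theta> + s *\<^sub>R axis k 1) \<le> phi \<theta> + s * g \<theta> $ k + L / 4 * s^2"
proof (cases "s = 0")
  case True thus ?thesis by simp
next
  case False
  define f0 where "f0 s = phi (\<theta> + s *\<^sub>R axis k 1)" for s
  define f1 where "f1 s = g (\<theta> + s *\<^sub>R axis k 1) $ k" for s
  define f2 where "f2 s = H (\<theta> + s *\<^sub>R axis k 1) $ k $ k" for s
  define diff where "diff m = (if m = 0 then f0 else if m = 1 then f1 else f2)" for m :: nat
  have d01: "DERIV f0 t :> f1 t" for t
    unfolding f0_def f1_def using line_deriv[OF grad[of "\<theta> + t *\<^sub>R axis k 1"]] by (simp add: inner_axis)
  have d12: "DERIV f1 t :> f2 t" for t unfolding f1_def f2_def by (rule D2)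
  have DER: "\<forall>m t. m < 2 \<and> min s 0 \<le> t \<and> t \<le> max s 0 \<longrightarrow> DERIV (diff m) t :> diff (Suc m) t"
  proof (intro allI impI)
    fix m :: nat and t assume "m < 2 \<and> min s 0 \<le> t \<and> t \<le> max s 0"
    hence "m = 0 \<or> m = 1" by auto
    thus "DERIV (diff m) t :> diff (Suc m) t" using d01 d12 by (auto simp: diff_def)
  qed
  from Taylor[of 2 diff f0 "min s 0" "max s 0" 0 s, OF _ _ DER] False
  obtain t where t: "f0 s = (\<Sum>m<2. diff m 0 / fact m * (s - 0) ^ m) + diff 2 t / fact 2 * (s - 0) ^ 2"
    by (auto simp: diff_def)
  hence "f0 s = f0 0 + f1 0 * s + f2 t / 2 * s^2"
    by (simp add: diff_def numeral_2_eq_2)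
  moreover have "f2 t / 2 * s^2 \<le> L / 4 * s^2"
    using Hkk_le[of "\<theta> + t *\<^sub>R axis k 1" k] by (intro mult_right_mono) (auto simp: f2_def)
  ultimately show ?thesis by (simp add: f0_def f1_def mult.commute)
qed

end



context sur2 begin

lemma main:
  assumes eta: "\<eta> > 0" and Lpos: "L > 0" and N2: "CARD('n) \<ge> 2"
  shows
    "(\<forall>x\<in>prob_simplex. \<forall>y\<in>prob_simplex. \<forall>t\<in>{0..1::real}.
        regR P \<eta> (t *\<^sub>R x + (1 - t) *\<^sub>R y)
          \<le> t * regR P \<eta> x + (1 - t) * regR P \<eta> y
             - \<eta> / (2 * L) * t * (1 - t) * (infnorm (x - y))\<^sup>2)
     \<and> (\<forall>x\<in>rel_interior prob_simplex. regR P \<eta> differentiable (at x within affine hull prob_simplex))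
     \<and> (\<forall>\<theta>. (\<exists>!x. x \<in> prob_simplex \<and>
                 (\<forall>y\<in>prob_simplex. \<theta> \<bullet> y - regR P \<eta> y \<le> \<theta> \<bullet> x - regR P \<eta> x))
           \<and> (\<forall>x. x \<in> prob_simplex \<and>
                 (\<forall>y\<in>prob_simplex. \<theta> \<bullet> y - regR P \<eta> y \<le> \<theta> \<bullet> x - regR P \<eta> x)
                 \<longrightarrow> (surplus P \<eta> has_derivative (\<lambda>h. x \<bullet> h)) (at \<theta>)))"
proof -
  define F where "F = surplus P \<eta>"
  define G where "G \<theta> = g ((1/\<eta>) *\<^sub>R \<theta>)" for \<theta>
  have Feq: "F \<theta> = \<eta> * phi ((1/\<eta>) *\<^sub>R \<theta>)" for \<theta> unfolding F_def by (rule surplus_scale[OF eta])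
  have Ffun: "F = (\<lambda>\<theta>. \<eta> * phi ((1/\<eta>) *\<^sub>R \<theta>))" using Feq by auto
  interpret A: absR F G "L / (4 * \<eta>)"
  proof
    fix \<theta> :: "real^'n"
    have "((\<lambda>\<theta>. (1/\<eta>) *\<^sub>R \<theta>) has_derivative (\<lambda>h. (1/\<eta>) *\<^sub>R h)) (at \<theta>)"
      by (auto intro!: derivative_eq_intros)
    from has_derivative_compose[OF this grad[of "(1/\<eta>) *\<^sub>R \<theta>"]]
    have "((\<lambda>\<theta>. phi ((1/\<eta>) *\<^sub>R \<theta>)) has_derivative (\<lambda>h. g ((1/\<eta>) *\<^sub>R \<theta>) \<bullet> ((1/\<eta>) *\<^sub>R h))) (at \<theta>)" .
    from has_derivative_mult_right[OF this, of \<eta>]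
    show "(F has_derivative (\<lambda>h. G \<theta> \<bullet> h)) (at \<theta>)" unfolding Ffun G_def
      by (rule has_derivative_eq_rhs) (use eta in \<open>auto simp: fun_eq_iff\<close>)
  next
    fix \<theta> \<theta>' :: "real^'n"
    have "phi ((1/\<eta>) *\<^sub>R \<theta>) + g ((1/\<eta>) *\<^sub>R \<theta>) \<bullet> ((1/\<eta>) *\<^sub>R \<theta>' - (1/\<eta>) *\<^sub>R \<theta>) \<le> phi ((1/\<eta>) *\<^sub>R \<theta>')"
      by (rule phi_sub)
    hence "\<eta> * (phi ((1/\<eta>) *\<^sub>R \<theta>) + g ((1/\<eta>) *\<^sub>R \<theta>) \<bullet> ((1/\<eta>) *\<^sub>R \<theta>' - (1/\<eta>) *\<^sub>R \<theta>)) \<le> \<eta> * phi ((1/\<eta>) *\<^sub>R \<theta>')"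
      using eta by simp
    moreover have "\<eta> * (g ((1/\<eta>) *\<^sub>R \<theta>) \<bullet> ((1/\<eta>) *\<^sub>R \<theta>' - (1/\<eta>) *\<^sub>R \<theta>)) = G \<theta> \<bullet> (\<theta>' - \<theta>)"
      unfolding G_def using eta by (simp add: scaleR_diff_right[symmetric])
    ultimately show "F \<theta> + G \<theta> \<bullet> (\<theta>' - \<theta>) \<le> F \<theta>'" unfolding Feq by (simp add: distrib_left)
  next
    fix \<theta> x :: "real^'n" assume "x \<in> prob_simplex"
    from phi_ge_inner[OF this, of "(1/\<eta>) *\<^sub>R \<theta>"]
    have "\<theta> \<bullet> x / \<eta> \<le> phi ((1/\<eta>) *\<^sub>R \<theta>)" by simp
    hence "\<theta> \<bullet> x \<le> \<eta> * phi ((1/\<eta>) *\<^sub>R \<theta>)" using eta by (simp add: divide_le_eq mult.commute)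
    thus "\<theta> \<bullet> x \<le> F \<theta>" unfolding Feq .
  next
    fix \<theta> :: "real^'n" show "G \<theta> \<in> prob_simplex" unfolding G_def by (rule g_simplex)
  next
    fix \<theta> :: "real^'n" and c
    have "(1/\<eta>) *\<^sub>R (\<theta> + (\<chi> i. c)) = (1/\<eta>) *\<^sub>R \<theta> + (\<chi> i. c / \<eta>)" by (simp add: vec_eq_iff add_divide_distrib)
    thus "F (\<theta> + (\<chi> i. c)) = F \<theta> + c" unfolding Feq using phi_shift eta by (simp add: distrib_left)
  next
    fix \<theta> \<theta>' :: "real^'n" and t :: real assume t: "0 \<le> t" "t \<le> 1"
    have "(1/\<eta>) *\<^sub>R (t *\<^sub>R \<theta> + (1 - t) *\<^sub>R \<theta>') = t *\<^sub>R ((1/\<eta>) *\<^sub>R \<theta>) + (1 - t) *\<^sub>R ((1/\<eta>) *\<^sub>R \<theta>')"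
      by (simp add: vec_eq_iff add_divide_distrib)
    with phi_convex[OF t, of "(1/\<eta>) *\<^sub>R \<theta>" "(1/\<eta>) *\<^sub>R \<theta>'"]
    have "phi ((1/\<eta>) *\<^sub>R (t *\<^sub>R \<theta> + (1 - t) *\<^sub>R \<theta>')) \<le> t * phi ((1/\<eta>) *\<^sub>R \<theta>) + (1 - t) * phi ((1/\<eta>) *\<^sub>R \<theta>')" by simp
    hence "\<eta> * phi ((1/\<eta>) *\<^sub>R (t *\<^sub>R \<theta> + (1 - t) *\<^sub>R \<theta>')) \<le> \<eta> * (t * phi ((1/\<eta>) *\<^sub>R \<theta>) + (1 - t) * phi ((1/\<eta>) *\<^sub>R \<theta>'))"
      using eta by simp
    thus "F (t *\<^sub>R \<theta> + (1 - t) *\<^sub>R \<theta>') \<le> t * F \<theta> + (1 - t) * F \<theta>'" unfolding Feq by (simp add: algebra_simps)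
  next
    fix \<theta> d :: "real^'n" and i k assume dik: "d$i \<noteq> d$k"
    hence "((1/\<eta>) *\<^sub>R d)$i \<noteq> ((1/\<eta>) *\<^sub>R d)$k" using eta by simp
    from phi_strict[OF this, of "(1/\<eta>) *\<^sub>R \<theta>"]
    have "phi ((1/\<eta>) *\<^sub>R \<theta> + (1/2) *\<^sub>R ((1/\<eta>) *\<^sub>R d)) < (phi ((1/\<eta>) *\<^sub>R \<theta>) + phi ((1/\<eta>) *\<^sub>R \<theta> + (1/\<eta>) *\<^sub>R d)) / 2" .
    moreover have "(1/\<eta>) *\<^sub>R (\<theta> + (1/2) *\<^sub>R d) = (1/\<eta>) *\<^sub>R \<theta> + (1/2) *\<^sub>R ((1/\<eta>) *\<^sub>R d)"
      "(1/\<eta>) *\<^sub>R (\<theta> + d) = (1/\<eta>) *\<^sub>R \<theta> + (1/\<eta>) *\<^sub>R d" by (simp_all add: algebra_simps)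
    ultimately have "phi ((1/\<eta>) *\<^sub>R (\<theta> + (1/2) *\<^sub>R d)) < (phi ((1/\<eta>) *\<^sub>R \<theta>) + phi ((1/\<eta>) *\<^sub>R (\<theta> + d))) / 2"
      by simp
    hence "\<eta> * phi ((1/\<eta>) *\<^sub>R (\<theta> + (1/2) *\<^sub>R d)) < \<eta> * ((phi ((1/\<eta>) *\<^sub>R \<theta>) + phi ((1/\<eta>) *\<^sub>R (\<theta> + d))) / 2)"
      using eta by (rule mult_strict_left_mono)
    moreover have "\<eta> * ((phi ((1/\<eta>) *\<^sub>R \<theta>) + phi ((1/\<eta>) *\<^sub>R (\<theta> + d))) / 2)
       = (\<eta> * phi ((1/\<eta>) *\<^sub>R \<theta>) + \<eta> * phi ((1/\<eta>) *\<^sub>R (\<theta> + d))) / 2" by (simp add: field_simps)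
    ultimately show "F (\<theta> + (1/2) *\<^sub>R d) < (F \<theta> + F (\<theta> + d)) / 2" unfolding Feq by linarith
  next
    fix \<theta> :: "real^'n" and s k
    have "(1/\<eta>) *\<^sub>R (\<theta> + s *\<^sub>R axis k 1) = (1/\<eta>) *\<^sub>R \<theta> + (s/\<eta>) *\<^sub>R axis k 1" by (simp add: vec_eq_iff add_divide_distrib)
    with phi_smooth[of "(1/\<eta>) *\<^sub>R \<theta>" "s/\<eta>" k]
    have "phi ((1/\<eta>) *\<^sub>R (\<theta> + s *\<^sub>R axis k 1)) \<le> phi ((1/\<eta>) *\<^sub>R \<theta>) + s/\<eta> * G \<theta> $ k + L/4 * (s/\<eta>)^2"
      by (simp add: G_def)
    hence "\<eta> * phi ((1/\<eta>) *\<^sub>R (\<theta> + s *\<^sub>R axis k 1)) \<le> \<eta> * (phi ((1/\<eta>) *\<^sub>R \<theta>) + s/\<eta> * G \<theta> $ k + L/4 * (s/\<eta>)^2)"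
      using eta by simp
    also have "\<dots> = \<eta> * phi ((1/\<eta>) *\<^sub>R \<theta>) + s * G \<theta> $ k + L / (4 * \<eta>) * s^2"
      using eta by (simp add: field_simps power2_eq_square)
    finally show "F (\<theta> + s *\<^sub>R axis k 1) \<le> F \<theta> + s * G \<theta> $ k + L / (4 * \<eta>) * s^2" unfolding Feq .
  next
    show "0 < L / (4 * \<eta>)" using eta Lpos by simp
  qed
  have Req: "regR P \<eta> = A.R" unfolding fun_eq_iff A.R_def regR_def by (simp add: F_def)
  have p1: "\<forall>x\<in>prob_simplex. \<forall>y\<in>prob_simplex. \<forall>t\<in>{0..1::real}.
        regR P \<eta> (t *\<^sub>R x + (1 - t) *\<^sub>R y)
          \<le> t * regR P \<eta> x + (1 - t) * regR P \<eta> y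
             - \<eta> / (2 * L) * t * (1 - t) * (infnorm (x - y))\<^sup>2"
  proof (intro ballI)
    fix x y :: "real^'n" and t :: real assume x: "x \<in> prob_simplex" and y: "y \<in> prob_simplex" and t: "t \<in> {0..1}"
    have t01: "0 \<le> t" "t \<le> 1" using t by auto
    have "\<eta> / (2 * L) * t * (1 - t) * (infnorm (x - y))\<^sup>2 \<le> t * (1 - t) / (4 * (L / (4 * \<eta>))) * (infnorm (x - y))\<^sup>2"
    proof -
      have e: "t * (1 - t) / (4 * (L / (4 * \<eta>))) = \<eta> / L * (t * (1 - t))" using eta Lpos by (simp add: field_simps)
      have "\<eta> / (2 * L) \<le> \<eta> / L" using eta Lpos by (simp add: field_simps)
      moreover have "0 \<le> t * (1 - t) * (infnorm (x - y))\<^sup>2" using t01 by simp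
      ultimately have "\<eta> / (2 * L) * (t * (1 - t) * (infnorm (x - y))\<^sup>2) \<le> \<eta> / L * (t * (1 - t) * (infnorm (x - y))\<^sup>2)"
        by (rule mult_right_mono)
      thus ?thesis unfolding e by (simp add: mult.assoc)
    qed
    with A.part1[OF x y t01] show "regR P \<eta> (t *\<^sub>R x + (1 - t) *\<^sub>R y)
          \<le> t * regR P \<eta> x + (1 - t) * regR P \<eta> y
             - \<eta> / (2 * L) * t * (1 - t) * (infnorm (x - y))\<^sup>2" unfolding Req by linarith
  qed
  have p2: "\<forall>x\<in>rel_interior prob_simplex. regR P \<eta> differentiable (at x within affine hull prob_simplex)"
    unfolding Req using A.part2 N2 by blast
  have p3: "\<forall>\<theta>. (\<exists>!x. x \<in> prob_simplex \<and>
                 (\<forall>y\<in>prob_simplex. \<theta> \<bullet> y - regR P \<eta> y \<le> \<theta> \<bullet> x - regR P \<eta> x))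
           \<and> (\<forall>x. x \<in> prob_simplex \<and>
                 (\<forall>y\<in>prob_simplex. \<theta> \<bullet> y - regR P \<eta> y \<le> \<theta> \<bullet> x - regR P \<eta> x)
                 \<longrightarrow> (surplus P \<eta> has_derivative (\<lambda>h. x \<bullet> h)) (at \<theta>))"
    unfolding Req using A.part3 unfolding F_def by blast
  show ?thesis using p1 p2 p3 by blast
qed

end

theorem proposition3:
  fixes P :: "(real^'n::finite) measure" and \<eta> L :: real
    and g :: "real^'n \<Rightarrow> real^'n" and H :: "real^'n \<Rightarrow> real^'n^'n"
  assumes N2: "CARD('n) \<ge> 2"
    \<comment> \<open>Assumption 1\<close>
    and prob: "prob_space P" and sets_P: "sets P = sets borel"
    and integ: "\<And>i. integrable P (\<lambda>e. e$i)"
    and mean0: "\<And>i. (\<integral>e. e$i \<partial>P) = 0"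
    and abs_cont: "absolutely_continuous lborel P"
    and full_supp: "\<And>U. open U \<Longrightarrow> U \<noteq> {} \<Longrightarrow> emeasure P U > 0"
    \<comment> \<open>Assumption 2: phi_1 is C^2 with gradient g and Hessian H, and 2 tr(H) <= L\<close>
    and grad: "\<And>\<theta>. (surplus P 1 has_derivative (\<lambda>h. g \<theta> \<bullet> h)) (at \<theta>)"
    and hess: "\<And>\<theta>. (g has_derivative (\<lambda>h. H \<theta> *v h)) (at \<theta>)"
    and hess_cont: "continuous_on UNIV H"
    and L_pos: "L > 0"
    and trace_bd: "\<And>\<theta>. 2 * trace (H \<theta>) \<le> L"
    and eta_pos: "\<eta> > 0"
  shows
    "(\<forall>x\<in>prob_simplex. \<forall>y\<in>prob_simplex. \<forall>t\<in>{0..1::real}.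
        regR P \<eta> (t *\<^sub>R x + (1 - t) *\<^sub>R y)
          \<le> t * regR P \<eta> x + (1 - t) * regR P \<eta> y
             - \<eta> / (2 * L) * t * (1 - t) * (infnorm (x - y))\<^sup>2)
     \<and> (\<forall>x\<in>rel_interior prob_simplex. regR P \<eta> differentiable (at x within affine hull prob_simplex))
     \<and> (\<forall>\<theta>. (\<exists>!x. x \<in> prob_simplex \<and>
                 (\<forall>y\<in>prob_simplex. \<theta> \<bullet> y - regR P \<eta> y \<le> \<theta> \<bullet> x - regR P \<eta> x))
           \<and> (\<forall>x. x \<in> prob_simplex \<and>
                 (\<forall>y\<in>prob_simplex. \<theta> \<bullet> y - regR P \<eta> y \<le> \<theta> \<bullet> x - regR P \<eta> x)
                 \<longrightarrow> (surplus P \<eta> has_derivative (\<lambda>h. x \<bullet> h)) (at \<theta>)))"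
proof -
  interpret sur2 P g H L
  proof -
    interpret prob_space P by (rule prob)
    show "sur2 P g H L"
      by unfold_locales (use sets_P integ mean0 full_supp grad hess trace_bd in auto)
  qed
  show ?thesis by (rule main[OF eta_pos L_pos N2])
qed

end
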